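(* Let $\mathcal{L}$ be a similarity type containing $0,+,-,\vee,\wedge,\bigvee^-$ (with $\bigvee^-$ of countably infinite arity), let $\mathbb{R}$ be an $\mathcal{L}$-algebra in which these symbols have their usual interpretations and $\bigvee^-(g,f_1,f_2,\dots)=\sup_{n\ge1}\{f_n\wedge g\}$, and let $\mathcal{Z}$ be the variety generated by this $\mathcal{L}$-algebra $\mathbb{R}$. If a quasi-equation with countably many premises $$[\tau_1=\rho_1,\ \tau_2=\rho_2,\ \dots]\Rightarrow\tau=\rho$$ ($\tau,\rho,\tau_n,\rho_n$ being $\mathcal{L}$-terms) holds in $\mathbb{R}$, then it holds in every $G\in\mathcal{Z}$.
   Context: A quasi-equation with countably many premises holds in an $\mathcal{L}$-algebra $A$ if for every assignment of the variables in $A$, whenever all premises $\tau_n=\rho_n$ hold, the conclusion $\tau=\rho$ holds. The variety generated by an algebra is the class of all algebras satisfying every equation (between possibly infinitary terms) true in it, equivalently its closure under products, subalgebras and homomorphic images. *)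

theory Defs
  imports Complex_Main
begin

text \<open>Operation symbols of type 'f; each symbol s has an arity given by the set
  ar s of argument positions, which is either a finite initial segment {..<n}
  or all of nat (countably infinite arity).\<close>

definition sim_type :: "('f \<Rightarrow> nat set) \<Rightarrow> bool" where
  "sim_type ar \<longleftrightarrow> (\<forall>s. ar s = UNIV \<or> (\<exists>n. ar s = {..<n}))"

datatype 'f trm = Var nat | App 'f "nat \<Rightarrow> 'f trm"

primrec eval :: "('f \<Rightarrow> (nat \<Rightarrow> 'a) \<Rightarrow> 'a) \<Rightarrow> (nat \<Rightarrow> 'a) \<Rightarrow> 'f trm \<Rightarrow> 'a" where
  "eval F \<sigma> (Var v) = \<sigma> v"
| "eval F \<sigma> (App s ts) = F s (\<lambda>i. eval F \<sigma> (ts i))"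

definition is_algebra :: "('f \<Rightarrow> nat set) \<Rightarrow> 'a set \<Rightarrow> ('f \<Rightarrow> (nat \<Rightarrow> 'a) \<Rightarrow> 'a) \<Rightarrow> bool" where
  "is_algebra ar C F \<longleftrightarrow>
     (\<forall>s x. (\<forall>i\<in>ar s. x i \<in> C) \<longrightarrow> F s x \<in> C) \<and>
     (\<forall>s x y. (\<forall>i\<in>ar s. x i = y i) \<longrightarrow> F s x = F s y)"

definition holds_eq :: "'a set \<Rightarrow> ('f \<Rightarrow> (nat \<Rightarrow> 'a) \<Rightarrow> 'a) \<Rightarrow> 'f trm \<Rightarrow> 'f trm \<Rightarrow> bool" where
  "holds_eq C F t u \<longleftrightarrow> (\<forall>\<sigma>. range \<sigma> \<subseteq> C \<longrightarrow> eval F \<sigma> t = eval F \<sigma> u)"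

definition holds_qeq :: "'a set \<Rightarrow> ('f \<Rightarrow> (nat \<Rightarrow> 'a) \<Rightarrow> 'a) \<Rightarrow> (nat \<Rightarrow> 'f trm) \<Rightarrow> (nat \<Rightarrow> 'f trm)
     \<Rightarrow> 'f trm \<Rightarrow> 'f trm \<Rightarrow> bool" where
  "holds_qeq C F ts us t u \<longleftrightarrow>
     (\<forall>\<sigma>. range \<sigma> \<subseteq> C \<longrightarrow> (\<forall>n. eval F \<sigma> (ts n) = eval F \<sigma> (us n)) \<longrightarrow> eval F \<sigma> t = eval F \<sigma> u)"

definition variety_gen :: "('f \<Rightarrow> nat set) \<Rightarrow> 'a set \<Rightarrow> ('f \<Rightarrow> (nat \<Rightarrow> 'a) \<Rightarrow> 'a)
     \<Rightarrow> ('b set \<times> ('f \<Rightarrow> (nat \<Rightarrow> 'b) \<Rightarrow> 'b)) set" where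
  "variety_gen ar C0 F0 = {(C, F). is_algebra ar C F \<and>
      (\<forall>t u. holds_eq C0 F0 t u \<longrightarrow> holds_eq C F t u)}"

end

theory Submission
  imports Defs "HOL-Library.Nat_Bijection"
begin

primrec subst :: "(nat \<Rightarrow> 'f trm) \<Rightarrow> 'f trm \<Rightarrow> 'f trm" where
  "subst \<theta> (Var v) = \<theta> v"
| "subst \<theta> (App s ts) = App s (\<lambda>i. subst \<theta> (ts i))"

lemma eval_subst: "eval F \<sigma> (subst \<theta> x) = eval F (\<lambda>i. eval F \<sigma> (\<theta> i)) x"
  by (induction x) auto

lemma eval_in: "is_algebra ar C F \<Longrightarrow> range \<sigma> \<subseteq> C \<Longrightarrow> eval F \<sigma> x \<in> C"
  by (induction x) (auto simp: is_algebra_def)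

definition bin :: "'f \<Rightarrow> 'f trm \<Rightarrow> 'f trm \<Rightarrow> 'f trm" where
  "bin s x y = App s (\<lambda>i. if i = 0 then x else y)"

definition neg :: "'f \<Rightarrow> 'f trm \<Rightarrow> 'f trm" where
  "neg m x = App m (\<lambda>_. x)"

primrec mulT :: "'f \<Rightarrow> 'f \<Rightarrow> nat \<Rightarrow> 'f trm \<Rightarrow> 'f trm" where
  "mulT z p 0 x = App z (\<lambda>_. x)"
| "mulT z p (Suc k) x = bin p x (mulT z p k x)"

definition absT :: "'f \<Rightarrow> 'f \<Rightarrow> 'f trm \<Rightarrow> 'f trm" where
  "absT j m x = bin j x (neg m x)"

definition KK :: "'f \<Rightarrow> 'f \<Rightarrow> 'f \<Rightarrow> 'f \<Rightarrow> 'f \<Rightarrow> 'f \<Rightarrow> nat \<Rightarrow> 'f trm" where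
  "KK z p m j mt vs k =
    (let g = bin j (absT j m (Var 0)) (absT j m (Var 1));
         e = (\<lambda>n. absT j m (bin p (Var (2*n+2)) (neg m (Var (2*n+3)))));
         chi = App vs (\<lambda>i. if i = 0 then g else
                  mulT z p (snd (prod_decode (i-1))) (e (fst (prod_decode (i-1)))));
         h = bin p g (neg m chi)
     in bin j (bin mt (Var k) h) (neg m h))"

lemma main_real:
  fixes RF :: "'f \<Rightarrow> (nat \<Rightarrow> real) \<Rightarrow> real"
    and zero plus minus join meet vsup :: 'f
  assumes z: "\<And>x. RF zero x = 0"
    and p: "\<And>x. RF plus x = x 0 + x 1"
    and m: "\<And>x. RF minus x = - x 0"
    and j: "\<And>x. RF join x = max (x 0) (x 1)"
    and mt: "\<And>x. RF meet x = min (x 0) (x 1)"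
    and vs: "\<And>x. RF vsup x = (SUP n\<in>{1..}. min (x n) (x 0))"
    and k: "k \<le> 1"
  shows "eval RF v (KK zero plus minus join meet vsup k) =
     (if \<forall>n. v (2*n+2) = v (2*n+3) then v k else 0)"
proof -
  have bin_p: "eval RF v (bin plus x y) = eval RF v x + eval RF v y" for x y
    by (simp add: bin_def p)
  have bin_j: "eval RF v (bin join x y) = max (eval RF v x) (eval RF v y)" for x y
    by (simp add: bin_def j)
  have bin_m: "eval RF v (bin meet x y) = min (eval RF v x) (eval RF v y)" for x y
    by (simp add: bin_def mt)
  have neg_e: "eval RF v (neg minus x) = - eval RF v x" for x
    by (simp add: neg_def m)
  have abs_e: "eval RF v (absT join minus x) = \<bar>eval RF v x\<bar>" for x
    by (simp add: absT_def bin_j neg_e)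
  have mul_e: "eval RF v (mulT zero plus q x) = real q * eval RF v x" for q x
    by (induction q) (auto simp: z bin_p algebra_simps)
  define G where "G = max \<bar>v 0\<bar> \<bar>v 1\<bar>"
  define E where "E = (\<lambda>n. \<bar>v (2*n+2) - v (2*n+3)\<bar>)"
  define S where "S = (SUP i\<in>{1::nat..}. min (real (snd (prod_decode (i-1))) * E (fst (prod_decode (i-1)))) G)"
  have G0: "G \<ge> 0" unfolding G_def by simp
  have E0: "E n \<ge> 0" for n unfolding E_def by simp
  have vk: "\<bar>v k\<bar> \<le> G" using k unfolding G_def by (cases k) auto
  have ev: "eval RF v (KK zero plus minus join meet vsup k) =
      max (min (v k) (G - S)) (- (G - S))"
    unfolding KK_def Let_def
    by (simp add: bin_j bin_m bin_p neg_e abs_e mul_e vs G_def E_def S_def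
         del: One_nat_def)
  show ?thesis
  proof (cases "\<forall>n. v (2*n+2) = v (2*n+3)")
    case True
    then have "E n = 0" for n unfolding E_def by simp
    then have "S = (SUP i\<in>{1::nat..}. 0)" unfolding S_def using G0
      by (intro SUP_cong) auto
    then have "S = 0" by simp
    then show ?thesis using True ev vk by auto
  next
    case False
    then obtain n where "v (2*n+2) \<noteq> v (2*n+3)" by auto
    then have En: "E n > 0" unfolding E_def by simp
    obtain q :: nat where q: "G < real q * E n" using En reals_Archimedean3 by blast
    define i where "i = prod_encode (n, q) + 1"
    have "S = G" unfolding S_def
    proof (rule cSup_eq_maximum)
      show "G \<in> (\<lambda>i. min (real (snd (prod_decode (i - 1))) * E (fst (prod_decode (i - 1)))) G) ` {1..}"
        using q by (intro image_eqI[where x=i]) (auto simp: i_def)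
      show "x \<le> G" if "x \<in> (\<lambda>i. min (real (snd (prod_decode (i - 1))) * E (fst (prod_decode (i - 1)))) G) ` {1..}" for x
        using that by auto
    qed
    then show ?thesis using False ev by auto
  qed
qed

theorem mainTheorem17:
  fixes ar :: "'f \<Rightarrow> nat set"
    and RF :: "'f \<Rightarrow> (nat \<Rightarrow> real) \<Rightarrow> real"
    and zero plus minus join meet vsup :: 'f
    and G :: "'b set" and GF :: "'f \<Rightarrow> (nat \<Rightarrow> 'b) \<Rightarrow> 'b"
    and ts us :: "nat \<Rightarrow> 'f trm" and t u :: "'f trm"
  assumes "sim_type ar"
    and "distinct [zero, plus, minus, join, meet, vsup]"
    and "ar zero = {}" and "ar plus = {..<2}" and "ar minus = {..<1}"
    and "ar join = {..<2}" and "ar meet = {..<2}" and "ar vsup = UNIV"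
    and "is_algebra ar UNIV RF"
    and "\<And>x. RF zero x = 0"
    and "\<And>x. RF plus x = x 0 + x 1"
    and "\<And>x. RF minus x = - x 0"
    and "\<And>x. RF join x = max (x 0) (x 1)"
    and "\<And>x. RF meet x = min (x 0) (x 1)"
    and "\<And>x. RF vsup x = (SUP n\<in>{1..}. min (x n) (x 0))"
    and "holds_qeq UNIV RF ts us t u"
    and "(G, GF) \<in> variety_gen ar UNIV RF"
  shows "holds_qeq G GF ts us t u"
proof -
  note R = assms(10-15)
  define K where "K = KK zero plus minus join meet vsup"
  have Kv: "k \<le> 1 \<Longrightarrow> eval RF v (K k) = (if \<forall>n. v (2*n+2) = v (2*n+3) then v k else 0)" for v k
    unfolding K_def by (rule main_real[OF R])
  define \<theta> where "\<theta> = (\<lambda>i. if i = 0 then t else if i = 1 then u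
       else if even i then ts ((i-2) div 2) else us ((i-3) div 2))"
  define \<rho> where "\<rho> = (\<lambda>i::nat. Var (if odd i \<and> i \<ge> 3 then i - 1 else i) :: 'f trm)"
  have th2: "\<theta> (2*n+2) = ts n" for n by (simp add: \<theta>_def)
  have th3: "\<theta> (2*n+3) = us n" for n by (simp add: \<theta>_def)
  have th2s: "\<theta> (Suc (Suc (2*n))) = ts n" for n by (simp add: \<theta>_def)
  have qe: "\<And>\<sigma>. (\<forall>n. eval RF \<sigma> (ts n) = eval RF \<sigma> (us n)) \<Longrightarrow> eval RF \<sigma> t = eval RF \<sigma> u"
    using assms(16) by (auto simp: holds_qeq_def)
  have eq1: "holds_eq UNIV RF (subst \<theta> (K 0)) (subst \<theta> (K 1))"
    unfolding holds_eq_def eval_subst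
  proof (intro allI impI)
    fix \<sigma> :: "nat \<Rightarrow> real"
    define v where "v = (\<lambda>i. eval RF \<sigma> (\<theta> i))"
    have c: "(\<forall>n. v (2*n+2) = v (2*n+3)) = (\<forall>n. eval RF \<sigma> (ts n) = eval RF \<sigma> (us n))"
      by (simp add: v_def th2 th3 th2s)
    have v0: "v 0 = eval RF \<sigma> t" and v1: "v 1 = eval RF \<sigma> u" by (simp_all add: v_def \<theta>_def)
    show "eval RF v (K 0) = eval RF v (K 1)"
      using Kv[of 0 v] Kv[of 1 v] c qe[of \<sigma>] v0 v1 by simp
  qed
  have rho_id: "(\<lambda>i. eval F w (\<rho> i)) = w" if "\<forall>n. w (2*n+2) = w (2*n+3)"
    for F :: "'f \<Rightarrow> (nat \<Rightarrow> 'c) \<Rightarrow> 'c" and w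
  proof
    fix i
    show "eval F w (\<rho> i) = w i"
    proof (cases "odd i \<and> i \<ge> 3")
      case True
      then have "i = 2*((i-3) div 2)+3" by presburger
      then obtain n where "i = 2*n+3" by blast
      then show ?thesis using that[rule_format, of n] by (simp add: \<rho>_def)
    qed (auto simp: \<rho>_def)
  qed
  have eq2: "holds_eq UNIV RF (subst \<rho> (K k)) (Var k)" if "k \<le> 1" for k
    unfolding holds_eq_def eval_subst
  proof (intro allI impI)
    fix \<sigma> :: "nat \<Rightarrow> real"
    have c: "\<forall>n. (\<lambda>i. eval RF \<sigma> (\<rho> i)) (2*n+2) = (\<lambda>i. eval RF \<sigma> (\<rho> i)) (2*n+3)"
      by (simp add: \<rho>_def)
    show "eval RF (\<lambda>i. eval RF \<sigma> (\<rho> i)) (K k) = eval RF \<sigma> (Var k)"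
      using Kv[OF that, of "\<lambda>i. eval RF \<sigma> (\<rho> i)"] c that by (simp add: \<rho>_def)
  qed
  have alg: "is_algebra ar G GF" and var: "\<And>a b. holds_eq UNIV RF a b \<Longrightarrow> holds_eq G GF a b"
    using assms(17) by (auto simp: variety_gen_def)
  show ?thesis unfolding holds_qeq_def
  proof (intro allI impI)
    fix \<sigma> assume rs: "range \<sigma> \<subseteq> G" and pr: "\<forall>n. eval GF \<sigma> (ts n) = eval GF \<sigma> (us n)"
    define v where "v = (\<lambda>i. eval GF \<sigma> (\<theta> i))"
    have rv: "range v \<subseteq> G" unfolding v_def using eval_in[OF alg rs] by auto
    have vc: "\<forall>n. v (2*n+2) = v (2*n+3)" using pr by (simp add: v_def th2 th3 th2s)
    have Kg: "eval GF v (K k) = v k" if "k \<le> 1" for k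
    proof -
      have "eval GF v (subst \<rho> (K k)) = eval GF v (Var k)"
        using var[OF eq2[OF that]] rv unfolding holds_eq_def by blast
      then show ?thesis unfolding eval_subst rho_id[OF vc] by simp
    qed
    have "eval GF \<sigma> (subst \<theta> (K 0)) = eval GF \<sigma> (subst \<theta> (K 1))"
      using var[OF eq1] rs unfolding holds_eq_def by blast
    then have "eval GF v (K 0) = eval GF v (K 1)" unfolding eval_subst v_def .
    then have "v 0 = v 1" using Kg[of 0] Kg[of 1] by simp
    then show "eval GF \<sigma> t = eval GF \<sigma> u" by (simp add: v_def \<theta>_def)
  qed
qed

end
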